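(* For any $\theta=(B,\Omega)$ and $\psi_i=(m_i,s_i)$, $\big[\nabla_{\mathrm{vec}(B)\psi_i}J_i(\nabla_{\psi_i\psi_i}J_i)^{-1}\nabla_{\psi_i\mathrm{vec}(B)}J_i\big](\theta,\psi_i)=-(D_{\tilde a_i}^{1/2}E_iD_{\tilde a_i}^{1/2})\otimes x_ix_i^\top$, where $E_i=G_i+(I_p-G_i)C_i(I_p-G_i)$, $G_i=D_{s_i}\Lambda_iD_{s_i}$, $\Lambda_i=\big(I_p+D_{s_i}^2(D_{\tilde a_i}+D_{\tilde a_i}D_{s_i}^2+\Omega_D)\big)^{-1}D_{\tilde a_i}D_{s_i}^2$ and $C_i=\big(I_p+D_{\tilde a_i}^{-1/2}\Omega D_{\tilde a_i}^{-1/2}-D_{s_i}\Lambda_iD_{s_i}\big)^{-1}$.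
   Context: PLN model, observation $i$ with counts $Y_i\in\mathbb N^p$, covariate $x_i\in\mathbb R^m$, offset $o_i\in\mathbb R^p$; $B\in\mathcal M_{m,p}(\mathbb R)$ (columns $B_j$), $\Omega$ symmetric positive definite. Variational parameter $\psi_i=(m_i,s_i)\in\mathbb R^p\times(0,\infty)^p$. Single-observation ELBO: $J_i(\theta,\psi_i)=Y_i^\top(o_i+m_i+B^\top x_i)-\tilde a_i^\top1_p-\sum_j\log(Y_{ij}!)+\frac12\log|\Omega|-\frac12m_i^\top\Omega m_i-\frac12\mathrm{diag}(\Omega)^\top s_i^2+\sum_j\log s_{ij}+\frac p2$, $\tilde a_{ij}=\exp(o_{ij}+x_i^\top B_j+m_{ij}+s_{ij}^2/2)$. $\mathrm{vec}(B)$ stacks the columns of $B$. Notation: $D_v=\mathrm{Diag}(v)$, $\Omega_D=I_p\odot\Omega$, $\otimes$ Kronecker product. *)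

theory Defs
  imports "HOL-Analysis.Analysis"
begin

text \<open>Matrices are Cartesian-product matrices; B :: real^'p^'m has rows indexed by 'm
(covariates) and columns B_j indexed by 'p.\<close>

definition col_of :: "'p::finite \<Rightarrow> real^'p^'m::finite \<Rightarrow> real^'m" where
  "col_of j B = (\<chi> k. B $ k $ j)"

definition Dg :: "real^'p::finite \<Rightarrow> real^'p^'p" where
  "Dg v = (\<chi> i j. if i = j then v $ i else 0)"

definition diag_part :: "real^'p::finite^'p \<Rightarrow> real^'p^'p" where
  "diag_part A = (\<chi> i j. if i = j then A $ i $ j else 0)"

definition pos_def :: "real^'p::finite^'p \<Rightarrow> bool" where
  "pos_def A \<longleftrightarrow> (\<forall>v. v \<noteq> 0 \<longrightarrow> v \<bullet> (A *v v) > 0)"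

definition atil :: "real^'p::finite \<Rightarrow> real^'m::finite \<Rightarrow> real^'p^'m \<Rightarrow> real^'p \<Rightarrow> real^'p \<Rightarrow> real^'p" where
  "atil off x B m s = (\<chi> j. exp (off $ j + x \<bullet> col_of j B + m $ j + (s $ j)^2 / 2))"

definition ELBO :: "nat^'p::finite \<Rightarrow> real^'p \<Rightarrow> real^'m::finite \<Rightarrow> real^'p^'m \<Rightarrow> real^'p^'p
    \<Rightarrow> real^'p \<Rightarrow> real^'p \<Rightarrow> real" where
  "ELBO Y off x B \<Omega> m s =
     (\<Sum>j\<in>UNIV. real (Y $ j) * (off $ j + m $ j + x \<bullet> col_of j B))
     - (\<Sum>j\<in>UNIV. atil off x B m s $ j)
     - (\<Sum>j\<in>UNIV. ln (fact (Y $ j)))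
     + ln (det \<Omega>) / 2
     - (m \<bullet> (\<Omega> *v m)) / 2
     - (\<Sum>j\<in>UNIV. \<Omega> $ j $ j * (s $ j)^2) / 2
     + (\<Sum>j\<in>UNIV. ln (s $ j))
     + real CARD('p) / 2"

definition vecB :: "real^'p::finite^'m::finite \<Rightarrow> real^('p \<times> 'm)" where
  "vecB B = (\<chi> i. B $ snd i $ fst i)"

definition unvecB :: "real^('p::finite \<times> 'm::finite) \<Rightarrow> real^'p^'m" where
  "unvecB b = (\<chi> k j. b $ (j,k))"

definition psi_of :: "real^'p::finite \<Rightarrow> real^'p \<Rightarrow> real^('p + 'p)" where
  "psi_of m s = (\<chi> l. case l of Inl j \<Rightarrow> m $ j | Inr j \<Rightarrow> s $ j)"

definition ELBOv :: "nat^'p::finite \<Rightarrow> real^'p \<Rightarrow> real^'m::finite \<Rightarrow> real^'p^'p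
    \<Rightarrow> real^('p \<times> 'm) \<Rightarrow> real^('p + 'p) \<Rightarrow> real" where
  "ELBOv Y off x \<Omega> b \<psi> = ELBO Y off x (unvecB b) \<Omega> (\<chi> j. \<psi> $ Inl j) (\<chi> j. \<psi> $ Inr j)"

definition hess_Bpsi :: "(real^('p::finite \<times> 'm::finite) \<Rightarrow> real^('p + 'p) \<Rightarrow> real)
    \<Rightarrow> real^('p \<times> 'm) \<Rightarrow> real^('p + 'p) \<Rightarrow> real^('p + 'p)^('p \<times> 'm)" where
  "hess_Bpsi F b \<psi> = (\<chi> a l. deriv (\<lambda>t. deriv (\<lambda>u.
      F (b + t *\<^sub>R axis a 1) (\<psi> + u *\<^sub>R axis l 1)) 0) 0)"

definition hess_psiB :: "(real^('p::finite \<times> 'm::finite) \<Rightarrow> real^('p + 'p) \<Rightarrow> real)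
    \<Rightarrow> real^('p \<times> 'm) \<Rightarrow> real^('p + 'p) \<Rightarrow> real^('p \<times> 'm)^('p + 'p)" where
  "hess_psiB F b \<psi> = (\<chi> l a. deriv (\<lambda>t. deriv (\<lambda>u.
      F (b + u *\<^sub>R axis a 1) (\<psi> + t *\<^sub>R axis l 1)) 0) 0)"

definition hess_psipsi :: "(real^('p::finite \<times> 'm::finite) \<Rightarrow> real^('p + 'p) \<Rightarrow> real)
    \<Rightarrow> real^('p \<times> 'm) \<Rightarrow> real^('p + 'p) \<Rightarrow> real^('p + 'p)^('p + 'p)" where
  "hess_psipsi F b \<psi> = (\<chi> l l'. deriv (\<lambda>t. deriv (\<lambda>u.
      F b (\<psi> + t *\<^sub>R axis l 1 + u *\<^sub>R axis l' 1)) 0) 0)"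

text \<open>Kronecker product, indices ordered consistently with vec.\<close>
definition kron :: "real^'p::finite^'p \<Rightarrow> real^'m::finite^'m \<Rightarrow> real^('p \<times> 'm)^('p \<times> 'm)" where
  "kron A M = (\<chi> i i'. A $ fst i $ fst i' * M $ snd i $ snd i')"

definition outer :: "real^'m::finite \<Rightarrow> real^'m^'m" where
  "outer x = (\<chi> k k'. x $ k * x $ k')"

definition Lambda_i :: "real^'p::finite^'p \<Rightarrow> real^'p \<Rightarrow> real^'p \<Rightarrow> real^'p^'p" where
  "Lambda_i \<Omega> a s =
     matrix_inv (mat 1 + Dg (\<chi> j. (s$j)^2) **
        (Dg a + Dg a ** Dg (\<chi> j. (s$j)^2) + diag_part \<Omega>))
     ** Dg a ** Dg (\<chi> j. (s$j)^2)"

definition G_i :: "real^'p::finite^'p \<Rightarrow> real^'p \<Rightarrow> real^'p \<Rightarrow> real^'p^'p" where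
  "G_i \<Omega> a s = Dg s ** Lambda_i \<Omega> a s ** Dg s"

definition C_i :: "real^'p::finite^'p \<Rightarrow> real^'p \<Rightarrow> real^'p \<Rightarrow> real^'p^'p" where
  "C_i \<Omega> a s = matrix_inv (mat 1 + Dg (\<chi> j. 1 / sqrt (a$j)) ** \<Omega> ** Dg (\<chi> j. 1 / sqrt (a$j))
                            - Dg s ** Lambda_i \<Omega> a s ** Dg s)"

definition E_i :: "real^'p::finite^'p \<Rightarrow> real^'p \<Rightarrow> real^'p \<Rightarrow> real^'p^'p" where
  "E_i \<Omega> a s = G_i \<Omega> a s + (mat 1 - G_i \<Omega> a s) ** C_i \<Omega> a s ** (mat 1 - G_i \<Omega> a s)"

end

theory Submission
  imports Defs
begin


lemma col_of_add[simp]: "col_of j (A + B) = col_of j A + col_of j B"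
  by (simp add: col_of_def vec_eq_iff)
lemma col_of_scaleR[simp]: "col_of j (c *\<^sub>R A) = c *\<^sub>R col_of j A"
  by (simp add: col_of_def vec_eq_iff)
lemma col_of_zero[simp]: "col_of j 0 = 0"
  by (simp add: col_of_def vec_eq_iff)
lemma mv_scaleR[simp]: "(\<Omega>::real^'n::finite^'m::finite) *v (u *\<^sub>R v) = u *\<^sub>R (\<Omega> *v v)"
  by (simp add: vec_eq_iff matrix_vector_mult_def sum_distrib_left algebra_simps)

definition D1 :: "nat^'p::finite \<Rightarrow> real^'p \<Rightarrow> real^'m::finite \<Rightarrow> real^'p^'p \<Rightarrow> real^'p^'m \<Rightarrow> real^'p \<Rightarrow> real^'p
   \<Rightarrow> real^'p^'m \<Rightarrow> real^'p \<Rightarrow> real^'p \<Rightarrow> real" where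
 "D1 Y off x \<Omega> B0 m0 s0 Bd md sd = (\<Sum>j\<in>UNIV. real(Y$j) * (md$j + x \<bullet> col_of j Bd))
   - (\<Sum>j\<in>UNIV. atil off x B0 m0 s0 $ j * (x \<bullet> col_of j Bd + md$j + s0$j * sd$j))
   - (md \<bullet> (\<Omega> *v m0) + m0 \<bullet> (\<Omega> *v md))/2
   - (\<Sum>j\<in>UNIV. \<Omega>$j$j * s0$j * sd$j) + (\<Sum>j\<in>UNIV. sd$j / s0$j)"

lemma quad_aff: fixes \<Omega>::"real^'n::finite^'n" shows "(m0 + u *\<^sub>R md) \<bullet> (\<Omega> *v (m0 + u *\<^sub>R md)) =
   m0 \<bullet> (\<Omega> *v m0) + u * (md \<bullet> (\<Omega> *v m0) + m0 \<bullet> (\<Omega> *v md)) + u^2 * (md \<bullet> (\<Omega> *v md))"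
  apply (simp only: matrix_vector_right_distrib inner_add_left inner_add_right mv_scaleR inner_scaleR_left inner_scaleR_right)
  apply (simp add: algebra_simps power2_eq_square)
  done

lemma d1:
  fixes Y :: "nat^'p::finite" and x :: "real^'m::finite"
  assumes "\<forall>j. s0$j > 0"
  shows "((\<lambda>u. ELBO Y off x (B0 + u *\<^sub>R Bd) \<Omega> (m0 + u *\<^sub>R md) (s0 + u *\<^sub>R sd)) has_real_derivative
   D1 Y off x \<Omega> B0 m0 s0 Bd md sd) (at 0)"
proof -
  have e: "(\<lambda>u. ELBO Y off x (B0 + u *\<^sub>R Bd) \<Omega> (m0 + u *\<^sub>R md) (s0 + u *\<^sub>R sd)) =
    (\<lambda>u. (\<Sum>j\<in>UNIV. real (Y $ j) * (off $ j + (m0$j + u * md$j) + (x \<bullet> col_of j B0 + u * (x \<bullet> col_of j Bd))))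
     - (\<Sum>j\<in>UNIV. exp (off $ j + (x \<bullet> col_of j B0 + u * (x \<bullet> col_of j Bd)) + (m0$j + u * md$j) + (s0$j + u * sd$j)^2 / 2))
     - (\<Sum>j\<in>UNIV. ln (fact (Y $ j)))
     + ln (det \<Omega>) / 2
     - (m0 \<bullet> (\<Omega> *v m0) + u * (md \<bullet> (\<Omega> *v m0) + m0 \<bullet> (\<Omega> *v md)) + u^2 * (md \<bullet> (\<Omega> *v md))) / 2
     - (\<Sum>j\<in>UNIV. \<Omega> $ j $ j * (s0$j + u * sd$j)^2) / 2
     + (\<Sum>j\<in>UNIV. ln (s0$j + u * sd$j))
     + real CARD('p) / 2)"
    by (rule ext) (simp add: ELBO_def atil_def quad_aff inner_add_right)
  show ?thesis unfolding e D1_def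
    apply (rule derivative_eq_intros refl | simp add: assms)+
    apply (simp add: atil_def sum_divide_distrib[symmetric] mult_ac)
    apply (subgoal_tac "(\<Sum>n\<in>UNIV. s0$n*(sd$n*(2*\<Omega>$n$n))) = 2*(\<Sum>n\<in>UNIV. s0$n*(sd$n*\<Omega>$n$n))")
     apply simp
    apply (simp add: sum_distrib_left mult_ac)
    done
qed
lemma d2:
  fixes Y :: "nat^'p::finite" and x :: "real^'m::finite"
  assumes "\<forall>j. s0$j > 0"
  shows "((\<lambda>t. D1 Y off x \<Omega> (B0 + t *\<^sub>R Bd') (m0 + t *\<^sub>R md') (s0 + t *\<^sub>R sd') Bd md sd) has_real_derivative
    - (\<Sum>j\<in>UNIV. atil off x B0 m0 s0 $ j * ((x \<bullet> col_of j Bd' + md'$j + s0$j * sd'$j)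
          * (x \<bullet> col_of j Bd + md$j + s0$j * sd$j) + sd'$j * sd$j))
    - (md \<bullet> (\<Omega> *v md') + md' \<bullet> (\<Omega> *v md))/2
    - (\<Sum>j\<in>UNIV. \<Omega>$j$j * sd'$j * sd$j) - (\<Sum>j\<in>UNIV. sd$j * sd'$j / (s0$j)^2)) (at 0)"
proof -
  have e: "(\<lambda>t. D1 Y off x \<Omega> (B0 + t *\<^sub>R Bd') (m0 + t *\<^sub>R md') (s0 + t *\<^sub>R sd') Bd md sd) =
    (\<lambda>t. (\<Sum>j\<in>UNIV. real(Y$j) * (md$j + x \<bullet> col_of j Bd))
   - (\<Sum>j\<in>UNIV. exp (off $ j + (x \<bullet> col_of j B0 + t * (x \<bullet> col_of j Bd')) + (m0$j + t * md'$j) + (s0$j + t * sd'$j)^2 / 2)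
        * (x \<bullet> col_of j Bd + md$j + (s0$j + t * sd'$j) * sd$j))
   - ((md \<bullet> (\<Omega> *v m0) + t * (md \<bullet> (\<Omega> *v md'))) + (m0 \<bullet> (\<Omega> *v md) + t * (md' \<bullet> (\<Omega> *v md))))/2
   - (\<Sum>j\<in>UNIV. \<Omega>$j$j * (s0$j + t * sd'$j) * sd$j) + (\<Sum>j\<in>UNIV. sd$j / (s0$j + t * sd'$j)))"
    by (rule ext) (simp add: D1_def atil_def inner_add_right inner_add_left matrix_vector_right_distrib)
  have nz: "\<And>j. s0$j \<noteq> 0" using assms by (metis less_irrefl)
  show ?thesis unfolding e
    apply (rule derivative_eq_intros refl | simp add: nz)+
    apply (simp add: atil_def sum_negf power2_eq_square algebra_simps sum.distrib sum_subtractf)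
    done
qed


definition H2 :: "real^'p::finite \<Rightarrow> real^'m::finite \<Rightarrow> real^'p^'p \<Rightarrow> real^'p^'m \<Rightarrow> real^'p \<Rightarrow> real^'p
   \<Rightarrow> real^'p^'m \<Rightarrow> real^'p \<Rightarrow> real^'p \<Rightarrow> real^'p^'m \<Rightarrow> real^'p \<Rightarrow> real^'p \<Rightarrow> real" where
 "H2 off x \<Omega> B0 m0 s0 Bd' md' sd' Bd md sd =
    - (\<Sum>j\<in>UNIV. atil off x B0 m0 s0 $ j * ((x \<bullet> col_of j Bd' + md'$j + s0$j * sd'$j)
          * (x \<bullet> col_of j Bd + md$j + s0$j * sd$j) + sd'$j * sd$j))
    - (md \<bullet> (\<Omega> *v md') + md' \<bullet> (\<Omega> *v md))/2
    - (\<Sum>j\<in>UNIV. \<Omega>$j$j * sd'$j * sd$j) - (\<Sum>j\<in>UNIV. sd$j * sd'$j / (s0$j)^2)"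

lemma hess_gen:
  fixes Y :: "nat^'p::finite" and x :: "real^'m::finite"
  assumes "\<forall>j. sz$j > 0"
    and G: "\<And>t u. G t u = ELBO Y off x (Bz + t *\<^sub>R Bd' + u *\<^sub>R Bd) \<Omega> (mz + t *\<^sub>R md' + u *\<^sub>R md) (sz + t *\<^sub>R sd' + u *\<^sub>R sd)"
  shows "deriv (\<lambda>t. deriv (\<lambda>u. G t u) 0) 0 = H2 off x \<Omega> Bz mz sz Bd' md' sd' Bd md sd"
proof -
  define U where "U = (\<Inter>j\<in>UNIV. {t::real. 0 < sz$j + t * sd'$j})"
  have oU: "open U" unfolding U_def
    by (intro open_INT ballI finite open_Collect_less continuous_intros)
  have U0: "0 \<in> U" using assms(1) by (simp add: U_def)
  have inner: "deriv (\<lambda>u. G t u) 0 = D1 Y off x \<Omega> (Bz + t *\<^sub>R Bd') (mz + t *\<^sub>R md') (sz + t *\<^sub>R sd') Bd md sd"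
    if "t \<in> U" for t
  proof -
    have "\<forall>j. (sz + t *\<^sub>R sd')$j > 0" using that by (simp add: U_def)
    from d1[OF this, of Y off x "Bz + t *\<^sub>R Bd'" Bd \<Omega> "mz + t *\<^sub>R md'" md sd]
    show ?thesis unfolding G by (rule DERIV_imp_deriv)
  qed
  have "((\<lambda>t. deriv (\<lambda>u. G t u) 0) has_real_derivative H2 off x \<Omega> Bz mz sz Bd' md' sd' Bd md sd) (at 0)"
    unfolding H2_def
    by (rule has_field_derivative_transform_within_open[OF d2[OF assms(1), of Y off x \<Omega> Bz Bd' mz md' sd' Bd md sd] oU U0])
       (simp add: inner)
  then show ?thesis by (rule DERIV_imp_deriv)
qed


definition mdir :: "'p::finite + 'p \<Rightarrow> real^'p" where "mdir l = (\<chi> j. if l = Inl j then 1 else 0)"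
definition sdir :: "'p::finite + 'p \<Rightarrow> real^'p" where "sdir l = (\<chi> j. if l = Inr j then 1 else 0)"

definition Mm :: "real^'p::finite^'p \<Rightarrow> real^'p \<Rightarrow> real^'p \<Rightarrow> real^('p+'p)^('p+'p)" where
  "Mm \<Omega> a s = (\<chi> l l'. case l of
      Inl i \<Rightarrow> (case l' of Inl i' \<Rightarrow> (if i = i' then a$i else 0) + \<Omega>$i$i' | Inr i' \<Rightarrow> (if i = i' then a$i * s$i else 0))
    | Inr i \<Rightarrow> (case l' of Inl i' \<Rightarrow> (if i = i' then a$i * s$i else 0)
         | Inr i' \<Rightarrow> (if i = i' then a$i * ((s$i)^2 + 1) + \<Omega>$i$i + 1/(s$i)^2 else 0)))"

definition Lv :: "real^'p::finite \<Rightarrow> real^'p \<Rightarrow> real^('p+'p)^'p" where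
  "Lv a s = (\<chi> j l. case l of Inl i \<Rightarrow> (if i = j then a$j else 0) | Inr i \<Rightarrow> (if i = j then a$j * s$j else 0))"

lemma psi_Inl: "(\<chi> j. (psi_of m s + t *\<^sub>R axis l 1 + u *\<^sub>R axis l' 1) $ Inl j) = m + t *\<^sub>R mdir l + u *\<^sub>R mdir l'"
  by (auto simp: vec_eq_iff psi_of_def mdir_def axis_def)
lemma psi_Inr: "(\<chi> j. (psi_of m s + t *\<^sub>R axis l 1 + u *\<^sub>R axis l' 1) $ Inr j) = s + t *\<^sub>R sdir l + u *\<^sub>R sdir l'"
  by (auto simp: vec_eq_iff psi_of_def sdir_def axis_def)
lemma psi_Inl1: "(\<chi> j. (psi_of m s + u *\<^sub>R axis l' 1) $ Inl j) = m + 0 *\<^sub>R 0 + u *\<^sub>R mdir l'"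
  by (auto simp: vec_eq_iff psi_of_def mdir_def axis_def)
lemma psi_Inr1: "(\<chi> j. (psi_of m s + u *\<^sub>R axis l' 1) $ Inr j) = s + 0 *\<^sub>R 0 + u *\<^sub>R sdir l'"
  by (auto simp: vec_eq_iff psi_of_def sdir_def axis_def)
lemma unvec_vec[simp]: "unvecB (vecB B) = B"
  by (simp add: vec_eq_iff unvecB_def vecB_def)
lemma unvec_add[simp]: "unvecB (b + c) = unvecB b + unvecB c"
  by (simp add: vec_eq_iff unvecB_def)
lemma unvec_scaleR[simp]: "unvecB (t *\<^sub>R b) = t *\<^sub>R unvecB b"
  by (simp add: vec_eq_iff unvecB_def)

lemma hpp_entry:
  fixes Y :: "nat^'p::finite" and x :: "real^'m::finite"
  assumes "\<forall>j. s$j > 0"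
  shows "hess_psipsi (ELBOv Y off x \<Omega>) (vecB B) (psi_of m s) $ l $ l' =
     H2 off x \<Omega> B m s 0 (mdir l) (sdir l) 0 (mdir l') (sdir l')"
  unfolding hess_psipsi_def vec_lambda_beta
  apply (rule hess_gen[OF assms, where Y=Y and Bz=B and Bd'=0 and Bd=0])
  apply (simp only: ELBOv_def psi_Inl psi_Inr unvec_vec)
  apply simp
  done

lemma if01_mult[simp]: "(if P then 1 else 0) * (y::real) = (if P then y else 0)"
  "(y::real) * (if P then 1 else 0) = (if P then y else 0)"
  "(if P then (z::real) else 0) * y = (if P then z * y else 0)"
  "y * (if P then (z::real) else 0) = (if P then y * z else 0)"
  by auto

lemma if0_misc: "(if P then (x::real) else 0) + (if P then y else 0) = (if P then x + y else 0)"
  "(if P then (x::real) else 0) / z = (if P then x / z else 0)"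
  "(if P then (if Q then (x::real) else 0) else 0) = (if P \<and> Q then x else 0)"
  by auto

lemma H2_pp:
  fixes x :: "real^'m::finite"
  assumes "transpose \<Omega> = \<Omega>" "\<forall>j. s$j > 0"
  shows "H2 off x \<Omega> B m s (0::real^'p::finite^'m) (mdir l) (sdir l) 0 (mdir l') (sdir l') = - Mm \<Omega> (atil off x B m s) s $ l $ l'"
proof -
  have sym: "\<Omega>$i$j = \<Omega>$j$i" for i j using assms(1) by (metis transpose_def vec_lambda_beta)
  show ?thesis
    apply (cases l; cases l')
    apply (simp_all add: H2_def Mm_def mdir_def sdir_def inner_vec_def matrix_vector_mult_def col_of_def)
    apply (auto simp: sym if0_misc power2_eq_square algebra_simps if_distrib[of "\<lambda>z. z * _"] if_distrib[of "\<lambda>z. _ * z"] cong: if_cong)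
    apply (simp_all add: sum.neutral)
    done
qed


lemma psi_1: "(\<chi> j. (psi_of m s + u *\<^sub>R axis l 1) $ Inl j) = m + u *\<^sub>R mdir l"
   "(\<chi> j. (psi_of m s + u *\<^sub>R axis l 1) $ Inr j) = s + u *\<^sub>R sdir l"
   "(\<chi> j. (psi_of m s) $ Inl j) = m" "(\<chi> j. (psi_of m s) $ Inr j) = s"
  by (auto simp: vec_eq_iff psi_of_def mdir_def sdir_def axis_def)

lemma xcol: "x \<bullet> col_of j (unvecB (axis a (1::real))) = (if j = fst a then x $ snd a else 0)"
proof -
  have "x \<bullet> col_of j (unvecB (axis a (1::real))) = (\<Sum>k\<in>UNIV. x$k * (if (j,k) = a then 1 else 0))"
    by (simp add: inner_vec_def col_of_def unvecB_def axis_def)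
  also have "\<dots> = (if j = fst a then x $ snd a else 0)"
    by (cases a) (auto simp: if_distrib cong: if_cong)
  finally show ?thesis .
qed

lemma hBp_entry:
  fixes Y :: "nat^'p::finite" and x :: "real^'m::finite"
  assumes "\<forall>j. s$j > 0"
  shows "hess_Bpsi (ELBOv Y off x \<Omega>) (vecB B) (psi_of m s) $ a $ l =
     H2 off x \<Omega> B m s (unvecB (axis a 1)) 0 0 0 (mdir l) (sdir l)"
  unfolding hess_Bpsi_def vec_lambda_beta
  apply (rule hess_gen[OF assms, where Y=Y and Bz=B and Bd'="unvecB (axis a 1)" and Bd=0 and mz=m
     and md'=0 and sd'=0 and md="mdir l" and sd="sdir l"])
  apply (simp only: ELBOv_def psi_1 unvec_add unvec_vec unvec_scaleR)
  apply simp
  done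

lemma hpB_entry:
  fixes Y :: "nat^'p::finite" and x :: "real^'m::finite"
  assumes "\<forall>j. s$j > 0"
  shows "hess_psiB (ELBOv Y off x \<Omega>) (vecB B) (psi_of m s) $ l $ a =
     H2 off x \<Omega> B m s 0 (mdir l) (sdir l) (unvecB (axis a 1)) 0 0"
  unfolding hess_psiB_def vec_lambda_beta
  apply (rule hess_gen[OF assms, where Y=Y and Bz=B and Bd="unvecB (axis a 1)" and Bd'=0 and mz=m
     and md=0 and sd=0 and md'="mdir l" and sd'="sdir l"])
  apply (simp only: ELBOv_def psi_1 unvec_add unvec_vec unvec_scaleR)
  apply simp
  done

lemma H2_Bp:
  fixes x :: "real^'m::finite"
  shows "H2 off x \<Omega> B m s (unvecB (axis a 1)) 0 0 (0::real^'p::finite^'m) (mdir l) (sdir l)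
     = - (x $ snd a * Lv (atil off x B m s) s $ fst a $ l)"
  apply (cases l)
  apply (simp_all add: H2_def Lv_def mdir_def sdir_def xcol)
  apply (auto simp: if0_misc power2_eq_square algebra_simps if_distrib[of "\<lambda>z. z * _"] if_distrib[of "\<lambda>z. _ * z"] cong: if_cong)
  apply (simp_all add: sum.neutral)
  done

lemma H2_pB:
  fixes x :: "real^'m::finite"
  shows "H2 off x \<Omega> B m s 0 (mdir l) (sdir l) (unvecB (axis a 1)) (0::real^'p::finite) 0
     = - (x $ snd a * Lv (atil off x B m s) s $ fst a $ l)"
  apply (cases l)
  apply (simp_all add: H2_def Lv_def mdir_def sdir_def xcol)
  apply (auto simp: if0_misc power2_eq_square algebra_simps if_distrib[of "\<lambda>z. z * _"] if_distrib[of "\<lambda>z. _ * z"] cong: if_cong)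
  done


lemma Dg_left[simp]: "(Dg u ** A) $ i $ j = u$i * A$i$j"
  by (simp add: Dg_def matrix_matrix_mult_def)
lemma Dg_right[simp]: "(A ** Dg u) $ i $ j = A$i$j * u$j"
  by (simp add: Dg_def matrix_matrix_mult_def)
lemma Dg_comp: "Dg u $ i $ j = (if i = j then u$i else 0)"
  by (simp add: Dg_def)
lemma Dg_mul: "Dg u ** Dg v = Dg (\<chi> j. u$j * v$j)"
  by (simp add: vec_eq_iff Dg_comp)
lemma mm_add_r: "((A::real^'n::finite^'m::finite) + B) ** C = A ** C + B ** (C::real^'k::finite^'n)"
  by (simp add: vec_eq_iff matrix_matrix_mult_def sum.distrib algebra_simps)
lemma mm_diff_r: "((A::real^'n::finite^'m::finite) - B) ** C = A ** C - B ** (C::real^'k::finite^'n)"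
  by (simp add: vec_eq_iff matrix_matrix_mult_def sum_subtractf algebra_simps)
lemma mm_diff_l: "(C::real^'n::finite^'m::finite) ** (A - B) = C ** A - C ** (B::real^'k::finite^'n)"
  by (simp add: vec_eq_iff matrix_matrix_mult_def sum_subtractf algebra_simps)
lemma mm_add_l: "(C::real^'n::finite^'m::finite) ** (A + B) = C ** A + C ** (B::real^'k::finite^'n)"
  by (rule matrix_add_ldistrib)

lemma inv_unique:
  fixes A B :: "real^'n::finite^'n"
  assumes "A ** B = mat 1" "B ** A = mat 1"
  shows "matrix_inv A = B"
proof -
  have ex: "\<exists>A'. A ** A' = mat 1 \<and> A' ** A = mat 1" using assms by blast
  have "A ** matrix_inv A = mat 1 \<and> matrix_inv A ** A = mat 1"
    unfolding matrix_inv_def by (rule someI_ex[OF ex])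
  then have "A ** matrix_inv A = mat 1" by blast
  then have "B ** (A ** matrix_inv A) = B" by simp
  then show ?thesis by (simp add: matrix_mul_assoc assms(2))
qed

lemma inv_ker:
  fixes A :: "real^'n::finite^'n"
  assumes "\<And>v. A *v v = 0 \<Longrightarrow> v = 0"
  shows "A ** matrix_inv A = mat 1" "matrix_inv A ** A = mat 1"
proof -
  obtain B where B: "B ** A = mat 1" using matrix_left_invertible_ker[of A] assms by blast
  then have "A ** B = mat 1" using matrix_left_right_inverse by blast
  have "matrix_inv A = B" by (rule inv_unique[OF \<open>A ** B = mat 1\<close> B])
  with B \<open>A ** B = mat 1\<close> show "A ** matrix_inv A = mat 1" "matrix_inv A ** A = mat 1" by simp_all
qed

lemma matrix_inv_Dg:
  assumes "\<And>j. u$j \<noteq> 0"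
  shows "matrix_inv (Dg u) = Dg (\<chi> j. 1 / u$j)"
  by (rule inv_unique) (simp_all add: Dg_mul assms vec_eq_iff Dg_comp mat_def)


lemma Dg_one: "Dg (\<chi> j. 1) = mat 1"
  by (simp add: vec_eq_iff Dg_comp mat_def)

lemma Dg_mv: "Dg u *v v = (\<chi> i. u$i * v$i)"
  by (simp add: vec_eq_iff Dg_def matrix_vector_mult_def)

lemma pd_diag: assumes "pos_def \<Omega>" shows "\<Omega>$i$i > 0"
proof -
  have "axis i 1 \<noteq> (0::real^'a)" by (simp add: axis_eq_0_iff)
  then have "axis i 1 \<bullet> (\<Omega> *v axis i 1) > 0" using assms by (simp add: pos_def_def)
  moreover have "axis i 1 \<bullet> (\<Omega> *v axis i 1) = \<Omega>$i$i"
    by (simp add: inner_vec_def matrix_vector_mult_def axis_def)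
  ultimately show ?thesis by simp
qed

lemma pd_nonneg: assumes "pos_def \<Omega>" shows "v \<bullet> (\<Omega> *v v) \<ge> 0"
  using assms by (cases "v = 0") (auto simp: pos_def_def less_imp_le)

definition qv :: "real^'p::finite^'p \<Rightarrow> real^'p \<Rightarrow> real^'p \<Rightarrow> real^'p" where
  "qv \<Omega> a s = (\<chi> j. a$j * ((s$j)^2 + 1) + \<Omega>$j$j + 1/(s$j)^2)"

lemma G_eq:
  assumes "\<forall>j. \<Omega>$j$j > 0" "\<forall>j. a$j > 0" "\<forall>j. s$j > 0"
  shows "G_i \<Omega> a s = Dg (\<chi> j. a$j * (s$j)^2 / qv \<Omega> a s $ j)"
proof -
  define r where "r = (\<chi> j. 1 + (s$j)^2 * (a$j + a$j * (s$j)^2 + \<Omega>$j$j))"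
  have rpos: "r$j > 0" for j
  proof -
    have "a$j + a$j * (s$j)^2 + \<Omega>$j$j > 0" using assms
      by (metis add_pos_pos mult_pos_pos zero_less_power)
    then show ?thesis unfolding r_def
      by (simp add: add_pos_nonneg less_imp_le)
  qed
  have inn: "mat 1 + Dg (\<chi> j. (s$j)^2) ** (Dg a + Dg a ** Dg (\<chi> j. (s$j)^2) + diag_part \<Omega>) = Dg r"
    by (simp add: vec_eq_iff Dg_comp mat_def diag_part_def r_def algebra_simps)
  have "Lambda_i \<Omega> a s = Dg (\<chi> j. 1 / r$j) ** Dg a ** Dg (\<chi> j. (s$j)^2)"
    unfolding Lambda_i_def inn using rpos by (subst matrix_inv_Dg) (auto, metis less_irrefl)
  then have "G_i \<Omega> a s = Dg (\<chi> j. s$j * (1 / r$j * a$j * (s$j)^2) * s$j)"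
    by (simp add: G_i_def Dg_mul)
  also have "\<dots> = Dg (\<chi> j. a$j * (s$j)^2 / qv \<Omega> a s $ j)"
  proof -
    have "s$j * (1 / r$j * a$j * (s$j)^2) * s$j = a$j * (s$j)^2 / qv \<Omega> a s $ j" for j
    proof -
      have "s$j \<noteq> 0" using assms(3) by (metis less_irrefl)
      then have "r$j = (s$j)^2 * qv \<Omega> a s $ j"
        by (simp add: r_def qv_def field_simps power2_eq_square)
      then show ?thesis using rpos[of j] \<open>s$j \<noteq> 0\<close> by (simp add: field_simps power2_eq_square)
    qed
    then show ?thesis by simp
  qed
  finally show ?thesis .
qed


lemma mv_add_r: "((A::real^'n::finite^'m::finite) + B) *v v = A *v v + B *v v"
  by (simp add: vec_eq_iff matrix_vector_mult_def sum.distrib algebra_simps)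
lemma mv_diff_r: "((A::real^'n::finite^'m::finite) - B) *v v = A *v v - B *v v"
  by (simp add: vec_eq_iff matrix_vector_mult_def sum_subtractf algebra_simps)

lemma inner_Dg: "v \<bullet> (Dg u *v w) = (Dg u *v v) \<bullet> (w::real^'n::finite)"
  by (simp add: Dg_mv inner_vec_def mult_ac)

lemma core:
  fixes \<Omega> :: "real^'p::finite^'p" and a s :: "real^'p"
  assumes pd: "pos_def \<Omega>" and apos: "\<forall>j. a$j > 0" and spos: "\<forall>j. s$j > 0"
  defines "Dq \<equiv> Dg (\<chi> j. sqrt (a$j))" and "Dh \<equiv> Dg (\<chi> j. 1 / sqrt (a$j))"
    and "G \<equiv> G_i \<Omega> a s" and "C \<equiv> C_i \<Omega> a s" and "q \<equiv> qv \<Omega> a s"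
  defines "X1 \<equiv> Dh ** C ** (mat 1 - G) ** Dq"
  defines "X2 \<equiv> Dg (\<chi> j. s$j * a$j / q$j) ** (mat 1 - X1)"
  shows "(Dg a + \<Omega>) ** X1 + Dg (\<chi> j. a$j * s$j) ** X2 = Dg a"
    and "Dg (\<chi> j. a$j * s$j) ** X1 + Dg q ** X2 = Dg (\<chi> j. a$j * s$j)"
    and "Dg a ** X1 + Dg (\<chi> j. a$j * s$j) ** X2 = Dq ** E_i \<Omega> a s ** Dq"
proof -
  have odiag: "\<forall>j. \<Omega>$j$j > 0" using pd_diag[OF pd] by blast
  have snz: "s$j \<noteq> 0" for j using spos[rule_format, of j] by simp
  have anz: "a$j \<noteq> 0" for j using apos[rule_format, of j] by simp
  define g where "g = (\<chi> j. a$j * (s$j)^2 / q$j)"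
  have Gd: "G = Dg g" unfolding G_def g_def q_def using G_eq[OF odiag apos spos] .
  have qpos: "q$j > 0" for j
  proof -
    have "0 < a$j * ((s$j)^2+1) + \<Omega>$j$j + 1/(s$j)^2" using odiag apos spos
      by (intro add_pos_pos mult_pos_pos) (simp_all add: snz)
    then show ?thesis by (simp add: q_def qv_def)
  qed
  have glt: "g$j < 1" for j
  proof -
    have "0 < a$j + \<Omega>$j$j + 1/(s$j)^2" using odiag apos spos
      by (intro add_pos_pos) (simp_all add: snz)
    then have "a$j * (s$j)^2 < q$j"
      unfolding q_def qv_def by (simp add: algebra_simps)
    then show ?thesis using qpos[of j] by (simp add: g_def)
  qed
  define N where "N = mat 1 + Dh ** \<Omega> ** Dh - G"
  have C_eq: "C = matrix_inv N"
    unfolding C_def N_def C_i_def G_def G_i_def Dh_def ..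
  have Ninj: "v = 0" if "N *v v = 0" for v
  proof -
    define y where "y = Dh *v v"
    have "v \<bullet> (N *v v) = (\<Sum>i\<in>UNIV. (1 - g$i) * (v$i)^2) + y \<bullet> (\<Omega> *v y)"
      unfolding N_def Gd y_def
      by (simp add: mv_add_r mv_diff_r inner_add_right inner_diff_right matrix_vector_mul_assoc[symmetric]
          inner_Dg[of v] Dh_def)
         (simp add: inner_vec_def Dg_mv sum_subtractf algebra_simps power2_eq_square)
    then have e0: "(\<Sum>i\<in>UNIV. (1 - g$i) * (v$i)^2) + y \<bullet> (\<Omega> *v y) = 0" using that by simp
    have nn: "\<And>i. 0 \<le> (1 - g$i) * (v$i)^2" using glt by (simp add: less_imp_le)
    have "(\<Sum>i\<in>UNIV. (1 - g$i) * (v$i)^2) = 0"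
      using e0 pd_nonneg[OF pd, of y] sum_nonneg[of UNIV "\<lambda>i. (1 - g$i) * (v$i)^2"] nn by (simp add: less_imp_le)
    then have "\<forall>i\<in>UNIV. (1 - g$i) * (v$i)^2 = 0" using sum_nonneg_eq_0_iff[of UNIV "\<lambda>i. (1 - g$i) * (v$i)^2"] nn by simp
    then show ?thesis using glt by (simp add: vec_eq_iff) (metis less_irrefl)
  qed
  have NC: "N ** C = mat 1" unfolding C_eq by (rule inv_ker(1)) (rule Ninj)
  have DqDh: "Dq ** Dh = mat 1" "Dh ** Dq = mat 1"
    using apos by (simp_all add: Dq_def Dh_def Dg_mul Dg_one[symmetric] less_imp_le anz) 
  have DqDq: "Dq ** Dq = Dg a"
    using apos by (simp add: Dq_def Dg_mul less_imp_le)
  have AX: "\<And>X. X ** Dq ** Dh = X" "\<And>X. X ** Dh ** Dq = X" "\<And>X. X ** N ** C = X"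
    by (simp_all add: matrix_mul_assoc[symmetric] DqDh NC)
  define W where "W = Dq ** G ** Dq"
  have W_eq: "W = Dg (\<chi> j. a$j * g$j)"
    using apos by (simp add: W_def Gd Dq_def Dg_mul less_imp_le mult_ac)
  have hW2: "Dg (\<chi> j. a$j * s$j) ** Dg (\<chi> j. s$j * a$j / q$j) = W"
    unfolding W_eq g_def by (simp add: Dg_mul power2_eq_square mult_ac)
  have hq: "Dg q ** Dg (\<chi> j. s$j * a$j / q$j) = Dg (\<chi> j. a$j * s$j)"
    using qpos by (simp add: Dg_mul mult_ac less_imp_le) (metis less_irrefl)
  have P1: "Dg a + \<Omega> = Dq ** N ** Dq + W"
    unfolding N_def W_def
    by (simp add: mm_add_l mm_diff_l mm_add_r mm_diff_r matrix_mul_assoc AX DqDh DqDq)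
  have P2: "Dg a - W = Dq ** (mat 1 - G) ** Dq"
    unfolding W_def by (simp add: mm_diff_l mm_diff_r DqDq)
  have P3: "(Dq ** N ** Dq) ** X1 = Dq ** (mat 1 - G) ** Dq"
    unfolding X1_def by (simp add: matrix_mul_assoc AX)
  have P4: "(Dq ** (mat 1 - G) ** Dq) ** X1 = Dq ** ((mat 1 - G) ** C ** (mat 1 - G)) ** Dq"
    unfolding X1_def by (simp add: matrix_mul_assoc AX)
  have X2e: "Dg (\<chi> j. a$j * s$j) ** X2 = W - W ** X1"
    unfolding X2_def by (simp add: matrix_mul_assoc hW2 mm_diff_l)
  show "(Dg a + \<Omega>) ** X1 + Dg (\<chi> j. a$j * s$j) ** X2 = Dg a"
    unfolding X2e P1 mm_add_r P3 P2[symmetric] by simp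
  show "Dg (\<chi> j. a$j * s$j) ** X1 + Dg q ** X2 = Dg (\<chi> j. a$j * s$j)"
    unfolding X2_def by (simp add: matrix_mul_assoc hq mm_diff_l)
  have Ee: "E_i \<Omega> a s = G + (mat 1 - G) ** C ** (mat 1 - G)"
    unfolding E_i_def G_def C_def ..
  have "Dg a ** X1 + Dg (\<chi> j. a$j * s$j) ** X2 = W + (Dg a - W) ** X1"
    unfolding X2e by (simp add: mm_diff_r)
  also have "\<dots> = Dq ** G ** Dq + Dq ** ((mat 1 - G) ** C ** (mat 1 - G)) ** Dq"
    unfolding P2 P4 by (simp add: W_def)
  also have "\<dots> = Dq ** E_i \<Omega> a s ** Dq"
    unfolding Ee by (simp add: mm_add_l mm_add_r)
  finally show "Dg a ** X1 + Dg (\<chi> j. a$j * s$j) ** X2 = Dq ** E_i \<Omega> a s ** Dq" .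
qed


lemma sum_Plus_UNIV: "(\<Sum>l\<in>(UNIV::('a::finite+'b::finite) set). f l) = (\<Sum>i\<in>UNIV. f (Inl i)) + (\<Sum>i\<in>UNIV. f (Inr i))"
proof -
  have "sum f (UNIV <+> UNIV) = sum (f \<circ> Inl) (UNIV::'a set) + sum (f \<circ> Inr) (UNIV::'b set)"
    by (rule sum.Plus) simp_all
  then show ?thesis by (simp only: UNIV_Plus_UNIV comp_def)
qed

lemma Mm_inj:
  fixes \<Omega> :: "real^'p::finite^'p" and a s :: "real^'p"
  assumes pd: "pos_def \<Omega>" and apos: "\<forall>j. a$j > 0" and spos: "\<forall>j. s$j > 0"
    and v: "Mm \<Omega> a s *v v = 0"
  shows "v = 0"
proof -
  define u where "u = (\<chi> i. v$Inl i)"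
  define w where "w = (\<chi> i. v$Inr i)"
  define q where "q = qv \<Omega> a s"
  have odiag: "\<forall>j. \<Omega>$j$j > 0" using pd_diag[OF pd] by blast
  have snz: "s$j \<noteq> 0" for j using spos[rule_format, of j] by simp
  have e1: "(Mm \<Omega> a s *v v)$Inl i = a$i * u$i + (\<Omega> *v u)$i + a$i * s$i * w$i" for i
    by (simp add: Mm_def matrix_vector_mult_def sum_Plus_UNIV u_def w_def distrib_right sum.distrib)
  have e2: "(Mm \<Omega> a s *v v)$Inr i = a$i * s$i * u$i + q$i * w$i" for i
    by (simp add: Mm_def matrix_vector_mult_def sum_Plus_UNIV u_def w_def q_def qv_def)
  define c where "c i = a$i + \<Omega>$i$i + 1/(s$i)^2" for i
  have cpos: "c i > 0" for i using odiag apos spos unfolding c_def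
    by (intro add_pos_pos) (simp_all add: snz)
  define t where "t i = a$i * (u$i + s$i * w$i)^2 + c i * (w$i)^2" for i
  have tnn: "t i \<ge> 0" for i unfolding t_def using apos cpos[of i]
    by (intro add_nonneg_nonneg mult_nonneg_nonneg) (simp_all add: less_imp_le)
  have "0 = (\<Sum>i\<in>UNIV. u$i * (Mm \<Omega> a s *v v)$Inl i) + (\<Sum>i\<in>UNIV. w$i * (Mm \<Omega> a s *v v)$Inr i)"
    using v by simp
  also have "\<dots> = u \<bullet> (\<Omega> *v u) + (\<Sum>i\<in>UNIV. t i)"
  proof -
    have "u$i * (Mm \<Omega> a s *v v)$Inl i + w$i * (Mm \<Omega> a s *v v)$Inr i = u$i * (\<Omega> *v u)$i + t i" for i
      unfolding e1 e2 t_def c_def q_def qv_def using snz[of i]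
      by (simp add: field_simps power2_eq_square)
    then have "(\<Sum>i\<in>UNIV. u$i * (Mm \<Omega> a s *v v)$Inl i) + (\<Sum>i\<in>UNIV. w$i * (Mm \<Omega> a s *v v)$Inr i)
       = (\<Sum>i\<in>UNIV. u$i * (\<Omega> *v u)$i) + (\<Sum>i\<in>UNIV. t i)"
      by (simp add: sum.distrib[symmetric])
    then show ?thesis by (simp add: inner_vec_def)
  qed
  finally have z: "u \<bullet> (\<Omega> *v u) + (\<Sum>i\<in>UNIV. t i) = 0" by simp
  have "(\<Sum>i\<in>UNIV. t i) = 0" using z pd_nonneg[OF pd, of u] sum_nonneg[of UNIV t] tnn by simp
  then have t0: "t i = 0" for i using sum_nonneg_eq_0_iff[of UNIV t] tnn by simp
  have w0: "w$i = 0" for i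
  proof -
    have "a$i * (u$i + s$i * w$i)^2 \<ge> 0" using apos by (simp add: less_imp_le)
    moreover have "c i * (w$i)^2 \<ge> 0" using cpos[of i] by (simp add: less_imp_le)
    ultimately have "c i * (w$i)^2 = 0" using t0[of i] unfolding t_def by linarith
    then show ?thesis using cpos[of i] by simp
  qed
  have "u \<bullet> (\<Omega> *v u) = 0" using z \<open>(\<Sum>i\<in>UNIV. t i) = 0\<close> by simp
  then have "u = 0" using pd unfolding pos_def_def by (metis less_irrefl)
  show "v = 0"
  proof (subst vec_eq_iff, rule allI)
    fix l show "v$l = 0$l"
      using \<open>u = 0\<close> w0 by (cases l) (simp_all add: u_def w_def vec_eq_iff)
  qed
qed


lemma blocks_exist:
  fixes \<Omega> :: "real^'p::finite^'p" and a s :: "real^'p"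
  assumes pd: "pos_def \<Omega>" and apos: "\<forall>j. a$j > 0" and spos: "\<forall>j. s$j > 0"
  shows "\<exists>Xm. Mm \<Omega> a s ** Xm = transpose (Lv a s) \<and>
     Lv a s ** Xm = Dg (\<chi> j. sqrt (a$j)) ** E_i \<Omega> a s ** Dg (\<chi> j. sqrt (a$j))"
proof -
  define X1 where "X1 = Dg (\<chi> j. 1 / sqrt (a$j)) ** C_i \<Omega> a s ** (mat 1 - G_i \<Omega> a s) ** Dg (\<chi> j. sqrt (a$j))"
  define X2 where "X2 = Dg (\<chi> j. s$j * a$j / qv \<Omega> a s $ j) ** (mat 1 - X1)"
  note c = core[OF pd apos spos, folded X1_def, folded X2_def]
  define Xm where "Xm = (\<chi> l j. case l of Inl i \<Rightarrow> X1$i$j | Inr i \<Rightarrow> X2$i$j)"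
  have "Mm \<Omega> a s ** Xm = transpose (Lv a s)"
  proof (subst vec_eq_iff, intro allI, subst vec_eq_iff, intro allI)
    fix l j
    show "(Mm \<Omega> a s ** Xm) $ l $ j = transpose (Lv a s) $ l $ j"
    proof (cases l)
      case (Inl i)
      have "((Dg a + \<Omega>) ** X1 + Dg (\<chi> j. a$j * s$j) ** X2) $ i $ j = Dg a $ i $ j" using c(1) by simp
      then have h: "a$i * X1$i$j + (\<Sum>k\<in>UNIV. \<Omega>$i$k * X1$k$j) + a$i * s$i * X2$i$j = (if i = j then a$i else 0)"
        by (simp add: mm_add_r Dg_comp matrix_matrix_mult_def distrib_right sum.distrib)
      show ?thesis using h
        by (simp add: Inl Mm_def Xm_def Lv_def transpose_def matrix_matrix_mult_def sum_Plus_UNIV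
            distrib_right sum.distrib)
    next
      case (Inr i)
      have "(Dg (\<chi> j. a$j * s$j) ** X1 + Dg (qv \<Omega> a s) ** X2) $ i $ j = Dg (\<chi> j. a$j * s$j) $ i $ j"
        using c(2) by simp
      then have h: "a$i * s$i * X1$i$j + qv \<Omega> a s $ i * X2$i$j = (if i = j then a$i * s$i else 0)"
        by (simp add: Dg_comp)
      show ?thesis using h
        by (simp add: Inr Mm_def Xm_def Lv_def transpose_def matrix_matrix_mult_def sum_Plus_UNIV qv_def)
    qed
  qed
  moreover have "Lv a s ** Xm = Dg (\<chi> j. sqrt (a$j)) ** E_i \<Omega> a s ** Dg (\<chi> j. sqrt (a$j))"
  proof (subst vec_eq_iff, intro allI, subst vec_eq_iff, intro allI)
    fix j j'
    have "(Dg a ** X1 + Dg (\<chi> j. a$j * s$j) ** X2) $ j $ j' = a$j * X1$j$j' + a$j * s$j * X2$j$j'"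
      by simp
    then show "(Lv a s ** Xm) $ j $ j' = (Dg (\<chi> j. sqrt (a$j)) ** E_i \<Omega> a s ** Dg (\<chi> j. sqrt (a$j))) $ j $ j'"
      unfolding c(3)[symmetric]
      by (simp add: Xm_def Lv_def matrix_matrix_mult_def sum_Plus_UNIV)
  qed
  ultimately show ?thesis by blast
qed


lemma neg_mv: "(- (A::real^'n::finite^'m::finite)) *v v = - (A *v v)"
  by (simp add: vec_eq_iff matrix_vector_mult_def sum_negf)

theorem proposition9:
  fixes Y :: "nat^'p" and off :: "real^'p" and x :: "real^'m"
    and B :: "real^'p^'m" and \<Omega> :: "real^'p^'p" and m s :: "real^'p"
  assumes "transpose \<Omega> = \<Omega>" and "pos_def \<Omega>"
    and "\<forall>j. s $ j > 0"
  shows "(let F = ELBOv Y off x \<Omega>; b = vecB B; \<psi> = psi_of m s; a = atil off x B m s in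
     hess_Bpsi F b \<psi> ** matrix_inv (hess_psipsi F b \<psi>) ** hess_psiB F b \<psi>
     = - kron (Dg (\<chi> j. sqrt (a$j)) ** E_i \<Omega> a s ** Dg (\<chi> j. sqrt (a$j))) (outer x))"
proof -
  define F where "F = ELBOv Y off x \<Omega>"
  define b where "b = vecB B"
  define \<psi> where "\<psi> = psi_of m s"
  define a where "a = atil off x B m s"
  define K where "K = Dg (\<chi> j. sqrt (a$j)) ** E_i \<Omega> a s ** Dg (\<chi> j. sqrt (a$j))"
  have apos: "\<forall>j. a$j > 0" by (simp add: a_def atil_def)
  have hBp: "hess_Bpsi F b \<psi> = (\<chi> i l. - (x$snd i * Lv a s $ fst i $ l))"
    unfolding F_def b_def \<psi>_def a_def
    by (simp add: vec_eq_iff hBp_entry[OF assms(3)] H2_Bp)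
  have hpB: "hess_psiB F b \<psi> = (\<chi> l i. - (x$snd i * Lv a s $ fst i $ l))"
    unfolding F_def b_def \<psi>_def a_def
    by (simp add: vec_eq_iff hpB_entry[OF assms(3)] H2_pB)
  have hpp: "hess_psipsi F b \<psi> = - Mm \<Omega> a s"
    unfolding F_def b_def \<psi>_def a_def
    by (simp add: vec_eq_iff hpp_entry[OF assms(3)] H2_pp[OF assms(1) assms(3)])
  obtain Xm where X1: "Mm \<Omega> a s ** Xm = transpose (Lv a s)" and X2: "Lv a s ** Xm = K"
    using blocks_exist[OF assms(2) apos assms(3)] unfolding K_def by blast
  define Z where "Z = (\<chi> l i. x$snd i * Xm$l$fst i)"
  have hZ: "hess_psipsi F b \<psi> ** Z = hess_psiB F b \<psi>"
  proof -
    have "((- Mm \<Omega> a s) ** Z) $ l $ i = - (x$snd i * (Mm \<Omega> a s ** Xm) $ l $ fst i)" for l i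
      by (simp add: matrix_matrix_mult_def Z_def sum_distrib_left sum_negf mult_ac)
    then show ?thesis unfolding hpp hpB X1 by (simp add: vec_eq_iff transpose_def)
  qed
  have inv: "matrix_inv (hess_psipsi F b \<psi>) ** hess_psipsi F b \<psi> = mat 1"
    unfolding hpp
    by (rule inv_ker(2)) (simp add: neg_mv Mm_inj[OF assms(2) apos assms(3)])
  have "hess_Bpsi F b \<psi> ** matrix_inv (hess_psipsi F b \<psi>) ** hess_psiB F b \<psi> = hess_Bpsi F b \<psi> ** Z"
  proof -
    have "matrix_inv (hess_psipsi F b \<psi>) ** (hess_psipsi F b \<psi> ** Z) = Z"
      by (simp add: matrix_mul_assoc inv)
    then show ?thesis unfolding hZ[symmetric] by (simp add: matrix_mul_assoc[symmetric])
  qed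
  also have "\<dots> = - kron K (outer x)"
  proof -
    have "(hess_Bpsi F b \<psi> ** Z) $ i $ i' = - (x$snd i * x$snd i' * (Lv a s ** Xm) $ fst i $ fst i')" for i i'
      unfolding hBp by (simp add: matrix_matrix_mult_def Z_def sum_distrib_left sum_negf mult_ac)
    then show ?thesis unfolding X2 by (simp add: vec_eq_iff kron_def outer_def mult_ac)
  qed
  finally show ?thesis unfolding Let_def F_def b_def \<psi>_def a_def K_def .
qed

end
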